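(* Let $K_1=\overline{1}$ and, for $j\ge1$, let $K_{j+1}$ be the periodic sequence whose repeating block is obtained by writing the repeating block of $K_j$ twice and replacing the last symbol by its complement. For $s=s_1s_2\dots\in\{0,1\}^{\mathbb N}$ let $\tau(s)=\sum_{k\ge1}t_k2^{-k}$ with $t_k=\sum_{i=1}^k s_i\pmod 2$, and put $\tau_j=\tau(K_j)$. Then for every $j\ge1$, $$\tau_{j+1}-\tau_j=\frac{2}{2^{2^j}+1}\,(1-\tau_j).$$ *)

theory Defs
  imports Complex_Main
begin

text \<open>Repeating block of K_j (j \<ge> 1), symbols in {0,1}. Index 0 is unused.\<close>
fun Kblock :: "nat \<Rightarrow> nat list" where
  "Kblock 0 = []"
| "Kblock (Suc 0) = [1]"
| "Kblock (Suc (Suc j)) =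
     (let b = Kblock (Suc j) in b @ butlast b @ [1 - last b])"

text \<open>The periodic sequence K_j = s_1 s_2 ..., indexed from 1 (value at 0 irrelevant).\<close>
definition K :: "nat \<Rightarrow> nat \<Rightarrow> nat" where
  "K j k = Kblock j ! ((k - 1) mod length (Kblock j))"

definition tpar :: "(nat \<Rightarrow> nat) \<Rightarrow> nat \<Rightarrow> nat" where
  "tpar s k = (\<Sum>i=1..k. s i) mod 2"

definition tau :: "(nat \<Rightarrow> nat) \<Rightarrow> real" where
  "tau s = (\<Sum>k. real (tpar s (Suc k)) / 2 ^ Suc k)"

end

theory Submission
  imports Defs
begin

definition Ssum :: "(nat \<Rightarrow> nat) \<Rightarrow> nat \<Rightarrow> nat" where
  "Ssum s k = (\<Sum>i=1..k. s i)"

lemma Ssum_Suc: "Ssum s (Suc k) = Ssum s k + s (Suc k)"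
  unfolding Ssum_def by simp

lemma tpar_Ssum: "tpar s k = Ssum s k mod 2"
  unfolding tpar_def Ssum_def by simp

lemma Ssum_periodic:
  assumes "\<And>i. i \<ge> 1 \<Longrightarrow> s (i + L) = s i"
  shows "Ssum s (k + L) = Ssum s k + Ssum s L"
proof (induction k)
  case 0 then show ?case by (simp add: Ssum_def)
next
  case (Suc k)
  have "Ssum s (Suc k + L) = Ssum s (k + L) + s (Suc k + L)"
    by (simp add: Ssum_Suc)
  also have "s (Suc k + L) = s (Suc k)" using assms[of "Suc k"] by simp
  finally show ?case using Suc by (simp add: Ssum_Suc)
qed

lemma sum_half: "(\<Sum>k<n. 1 / 2 ^ Suc k :: real) = 1 - 1 / 2 ^ n"
  by (induction n) (auto simp: field_simps)

lemma tau_anti: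
  assumes L: "L > 0" and anti: "\<And>k. tpar s (k + L) = 1 - tpar s k"
  shows "tau s = ((\<Sum>k<L. real (tpar s (Suc k)) / 2 ^ Suc k) * 2 ^ L + 1) / (2 ^ L + 1)"
proof -
  define f where "f k = real (tpar s (Suc k)) / 2 ^ Suc k" for k
  define A where "A = (\<Sum>k<L. f k)"
  have tle: "tpar s k \<le> 1" for k unfolding tpar_def by simp
  have sg: "summable (\<lambda>n. (1/2::real)^Suc n)" using power_half_series by (rule sums_summable)
  have sf: "summable f"
  proof (rule summable_comparison_test[OF _ sg])
    show "\<exists>N. \<forall>n\<ge>N. norm (f n) \<le> (1/2) ^ Suc n"
      using tle by (auto simp: f_def power_divide divide_right_mono)
  qed
  have tau: "tau s = suminf f" unfolding tau_def f_def by simp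
  have shift: "f (n + L) = ((1/2)^Suc n - f n) / 2 ^ L" for n
  proof -
    have "tpar s (Suc n + L) = 1 - tpar s (Suc n)" by (rule anti)
    then have "real (tpar s (Suc (n + L))) = 1 - real (tpar s (Suc n))"
      using tle[of "Suc n"] by (simp add: of_nat_diff)
    then show ?thesis unfolding f_def by (simp add: power_add field_simps)
  qed
  have "(\<lambda>n. f (n + L)) sums ((1 - suminf f) / 2 ^ L)"
    unfolding shift
    by (intro sums_divide sums_diff power_half_series summable_sums sf)
  then have "(\<Sum>n. f (n + L)) = (1 - suminf f) / 2 ^ L" by (rule sums_unique[symmetric])
  then have "suminf f = (1 - suminf f) / 2 ^ L + A"
    using suminf_split_initial_segment[OF sf, of L] A_def by simp
  then have "suminf f * (2 ^ L + 1) = A * 2 ^ L + 1" by (simp add: field_simps)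
  moreover have "(2::real) ^ L + 1 \<noteq> 0"
  proof -
    have "(0::real) < 2 ^ L" by simp
    then show ?thesis by linarith
  qed
  ultimately have "suminf f = (A * 2 ^ L + 1) / (2 ^ L + 1)" by (simp add: eq_divide_eq)
  then show ?thesis unfolding tau A_def f_def .
qed

lemma Kblock_Suc: "j \<ge> 1 \<Longrightarrow> Kblock (Suc j) = Kblock j @ butlast (Kblock j) @ [1 - last (Kblock j)]"
  by (cases j rule: nat.exhaust; simp add: Let_def)

lemma Kblock_props0: "length (Kblock (Suc n)) = 2 ^ n \<and> (\<forall>x\<in>set (Kblock (Suc n)). x \<le> 1) \<and> odd (sum_list (Kblock (Suc n)))"
proof (induction n)
  case 0 then show ?case by simp
next
  case (Suc n)
  define j where "j = Suc n"
  have hj: "j \<ge> 1" unfolding j_def by simp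
  have IH: "length (Kblock j) = 2 ^ (j - 1) \<and> (\<forall>x\<in>set (Kblock j). x \<le> 1) \<and> odd (sum_list (Kblock j))"
    using Suc.IH unfolding j_def by simp
  let ?b = "Kblock j"
  have ne: "?b \<noteq> []" using IH by auto
  have lb: "last ?b \<le> 1" using IH ne by auto
  have sl: "sum_list ?b = sum_list (butlast ?b) + last ?b"
    using ne by (metis append_butlast_last_id sum_list_append sum_list_simps add.commute add_0_right)
  have len: "length ?b = 2 ^ (j - 1)" using IH by blast
  have "length (Kblock (Suc j)) = 2 * 2 ^ (j - 1)"
    using Kblock_Suc[OF hj] len ne by simp
  also have "\<dots> = 2 ^ (Suc j - 1)" unfolding j_def by simp
  finally have L: "length (Kblock (Suc j)) = 2 ^ (Suc j - 1)" .
  have E: "\<forall>x\<in>set (Kblock (Suc j)). x \<le> 1"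
    using Kblock_Suc[OF hj] IH by (auto dest: in_set_butlastD)
  have "sum_list (Kblock (Suc j)) = sum_list ?b + sum_list (butlast ?b) + (1 - last ?b)"
    using Kblock_Suc[OF hj] by simp
  also have "\<dots> = 2 * sum_list (butlast ?b) + 1" using sl lb IH by simp
  finally have "odd (sum_list (Kblock (Suc j)))" by simp
  with L E show ?case unfolding j_def by simp
qed

lemma Kblock_props: "j \<ge> 1 \<Longrightarrow> length (Kblock j) = 2 ^ (j - 1) \<and> (\<forall>x\<in>set (Kblock j). x \<le> 1) \<and> odd (sum_list (Kblock j))"
using Kblock_props0[of "j - 1"] by simp


lemma sum_split_lt: "(\<Sum>k<m+(n::nat). f k) = (\<Sum>k<m. f k) + (\<Sum>k<n. f (k + m))"
  by (induction n) (auto simp: add.commute add.left_commute)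

lemma K_periodic:
  assumes "j \<ge> 1" "i \<ge> 1"
  shows "K j (i + length (Kblock j)) = K j i"
proof -
  have "i + length (Kblock j) - 1 = (i - 1) + length (Kblock j)" using assms by simp
  then show ?thesis unfolding K_def by simp
qed

lemma Ssum_K_block:
  assumes "j \<ge> 1"
  shows "Ssum (K j) (length (Kblock j)) = sum_list (Kblock j)"
proof -
  have "Ssum (K j) (length (Kblock j)) = (\<Sum>k<length (Kblock j). K j (Suc k))"
    unfolding Ssum_def by (simp add: sum.atLeast1_atMost_eq)
  also have "\<dots> = (\<Sum>k<length (Kblock j). Kblock j ! k)"
    by (rule sum.cong) (auto simp: K_def)
  also have "\<dots> = sum_list (Kblock j)"
    by (simp add: sum_list_sum_nth atLeast0LessThan)
  finally show ?thesis .
qed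

lemma K_anti:
  assumes "j \<ge> 1"
  shows "tpar (K j) (k + length (Kblock j)) = 1 - tpar (K j) k"
proof -
  have "Ssum (K j) (k + length (Kblock j)) = Ssum (K j) k + sum_list (Kblock j)"
    using Ssum_periodic[of "K j" "length (Kblock j)" k] K_periodic[OF assms] Ssum_K_block[OF assms]
    by simp
  moreover have "odd (sum_list (Kblock j))" using Kblock_props[OF assms] by blast
  ultimately show ?thesis unfolding tpar_Ssum by presburger
qed

lemma K_agree:
  assumes "j \<ge> 1" "1 \<le> i" "i < 2 * length (Kblock j)"
  shows "K (Suc j) i = K j i"
proof -
  let ?b = "Kblock j"
  let ?L = "length ?b"
  have ne: "?b \<noteq> []" and L: "?L = 2 ^ (j - 1)" using Kblock_props[OF assms(1)] by auto
  have L2: "length (Kblock (Suc j)) = 2 * ?L" using Kblock_Suc[OF assms(1)] ne by simp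
  have "K (Suc j) i = Kblock (Suc j) ! (i - 1)" unfolding K_def L2 using assms by simp
  also have "\<dots> = (?b @ butlast ?b) ! (i - 1)"
    unfolding Kblock_Suc[OF assms(1)] using assms ne
    by (simp add: nth_append)
  also have "\<dots> = ?b ! ((i - 1) mod ?L)"
  proof (cases "i - 1 < ?L")
    case True then show ?thesis by (simp add: nth_append)
  next
    case False
    then have "(i - 1) mod ?L = i - 1 - ?L" using assms
      by (simp add: mod_if le_mod_geq)
    then show ?thesis using False assms by (simp add: nth_append nth_butlast)
  qed
  also have "\<dots> = K j i" unfolding K_def by simp
  finally show ?thesis .
qed


lemma final_alg:
  fixes A N :: real
  assumes "N > 0"
  shows "((A + (1 - 1 / N - A) / N + 1 / (N * N)) * (N * N) + 1) / (N * N + 1) - (A * N + 1) / (N + 1)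
    = 2 / (N * N + 1) * (1 - (A * N + 1) / (N + 1))"
proof -
  have n1: "N + 1 \<noteq> 0" "N * N + 1 \<noteq> 0" using assms by (auto simp: add_pos_pos) (smt (verit) zero_le_square)
  have "(A + (1 - 1 / N - A) / N + 1 / (N * N)) * (N * N) = A * N * N - A * N + N"
    using assms by (simp add: field_simps)
  then show ?thesis using n1 by (simp add: field_simps)
qed

definition P :: "(nat \<Rightarrow> nat) \<Rightarrow> nat \<Rightarrow> real" where
  "P s n = (\<Sum>k<n. real (tpar s (Suc k)) / 2 ^ Suc k)"

theorem mainTheorem6:
  fixes j :: nat
  assumes "j \<ge> 1"
  shows "tau (K (j + 1)) - tau (K j) = 2 / (2 ^ (2 ^ j) + 1) * (1 - tau (K j))"
proof -
  let ?b = "Kblock j"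
  define L where "L = length ?b"
  define N :: real where "N = 2 ^ L"
  have ne: "?b \<noteq> []" and L: "L = 2 ^ (j - 1)" and odd: "odd (sum_list ?b)"
    using Kblock_props[OF assms] unfolding L_def by auto
  have Lpos: "L > 0" using L by simp
  have L2: "length (Kblock (Suc j)) = 2 * L" using Kblock_Suc[OF assms] ne L_def by simp
  have j1: "Suc j \<ge> 1" by simp
  have oddS: "odd (sum_list (Kblock (Suc j)))" using Kblock_props[OF j1] by blast
  have pj: "2 ^ j = 2 * L" using L assms by (metis Suc_diff_le diff_Suc_1 power_Suc)
  have NN: "(2::real) ^ (2 ^ j) = N * N" unfolding pj N_def by (simp add: power_add mult_2)
  have tauj: "tau (K j) = (P (K j) L * N + 1) / (N + 1)"
    unfolding P_def N_def L_def by (rule tau_anti) (use Lpos L_def K_anti[OF assms] in auto)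
  have tauj1: "tau (K (Suc j)) = (P (K (Suc j)) (2 * L) * (N * N) + 1) / (N * N + 1)"
    unfolding P_def NN[symmetric] pj[symmetric]
    by (rule tau_anti) (use Lpos pj L2 K_anti[OF j1] in auto)
  have tL: "tpar (K j) L = 1"
    using Ssum_K_block[OF assms] odd unfolding tpar_Ssum L_def by presburger
  have t2L: "tpar (K j) (2 * L) = 0"
    using K_anti[OF assms, of L] tL unfolding L_def by (simp add: mult_2)
  have t2L': "tpar (K (Suc j)) (2 * L) = 1"
    proof -
    have "Ssum (K (Suc j)) (2 * L) = sum_list (Kblock (Suc j))" using Ssum_K_block[OF j1] L2 by simp
    then show ?thesis using oddS unfolding tpar_Ssum by (simp add: odd_iff_mod_2_eq_one)
  qed
  have agree: "tpar (K (Suc j)) k = tpar (K j) k" if "k < 2 * L" for k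
  proof -
    have "Ssum (K (Suc j)) k = Ssum (K j) k"
      unfolding Ssum_def using that K_agree[OF assms] L_def by (intro sum.cong) auto
    then show ?thesis unfolding tpar_Ssum by simp
  qed
  define m where "m = 2 * L - 1"
  have m: "2 * L = Suc m" using Lpos unfolding m_def by simp
  have Pm: "P (K (Suc j)) m = P (K j) m"
    unfolding P_def using agree m by (intro sum.cong) auto
  have A1: "P (K (Suc j)) (2 * L) = P (K j) (2 * L) + 1 / (N * N)"
  proof -
    have e1: "P (K (Suc j)) (Suc m) = P (K (Suc j)) m + real (tpar (K (Suc j)) (Suc m)) / 2 ^ Suc m"
      unfolding P_def by simp
    have e2: "P (K j) (Suc m) = P (K j) m + real (tpar (K j) (Suc m)) / 2 ^ Suc m"
      unfolding P_def by simp
    have e3: "(2::real) ^ Suc m = N * N" unfolding N_def m[symmetric] by (simp add: power_add mult_2)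
    show ?thesis unfolding m using e1 e2 e3 Pm t2L' t2L unfolding m by simp
  qed
  have half: "(\<Sum>k<L. 1 / 2 ^ Suc k :: real) = 1 - 1 / N" unfolding N_def by (rule sum_half)
  have "P (K j) (L + L) = P (K j) L + (\<Sum>k<L. real (tpar (K j) (Suc k + L)) / 2 ^ (Suc k + L))"
    unfolding P_def sum_split_lt by simp
  also have "(\<Sum>k<L. real (tpar (K j) (Suc k + L)) / 2 ^ (Suc k + L))
      = (\<Sum>k<L. (1 / 2 ^ Suc k - real (tpar (K j) (Suc k)) / 2 ^ Suc k) / N)"
  proof (rule sum.cong)
    fix k
    have "tpar (K j) (Suc k + L) = 1 - tpar (K j) (Suc k)" using K_anti[OF assms, of "Suc k"] L_def by simp
    moreover have "tpar (K j) (Suc k) \<le> 1" unfolding tpar_def by simp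
    ultimately have "real (tpar (K j) (Suc k + L)) = 1 - real (tpar (K j) (Suc k))" by (simp add: of_nat_diff)
    then show "real (tpar (K j) (Suc k + L)) / 2 ^ (Suc k + L) = (1 / 2 ^ Suc k - real (tpar (K j) (Suc k)) / 2 ^ Suc k) / N"
      unfolding N_def by (simp add: power_add field_simps)
  qed simp
  also have "\<dots> = (1 - 1 / N - P (K j) L) / N"
    unfolding P_def half[symmetric] by (simp only: sum_divide_distrib[symmetric] sum_subtractf)
  finally have A2: "P (K j) (2 * L) = P (K j) L + (1 - 1 / N - P (K j) L) / N" by (simp add: mult_2)
  have Npos: "N > 0" unfolding N_def by simp
  show ?thesis
    unfolding tauj tauj1 NN Suc_eq_plus1[symmetric] A1 A2
    using final_alg[OF Npos] by simp
qed

end
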